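(* Let $H$ be a complex Hilbert space, $\varphi,\psi:[0,1]\to\mathbb{R}$ continuous, $A\in\mathbb{B}(H)$ and $t\in[0,1]$. Then $$\omega_t^2(\varphi,\psi;A)\le|\varphi(t)|^2\omega^2(A)+|\varphi(t)\psi(t)|\,\omega(A^2)+\frac{|\varphi(t)|+|\psi(t)|}{2}\,|\psi(t)|\,\|A^*A+AA^*\|.$$
   Context: $S_1(H)$ is the unit sphere of $H$, $\omega(T)=\sup_{x\in S_1(H)}|\langle Tx,x\rangle|$, and $\omega_t(\varphi,\psi;A)=\sup_{x\in S_1(H)}|\langle(\varphi(t)A+\psi(t)A^* )x,x\rangle|$. *)

theory Defs
  imports "HOL-Analysis.Analysis"
begin

class cvec = real_vector +
  fixes scaleC :: "complex \<Rightarrow> 'a \<Rightarrow> 'a" (infixr "*\<^sub>C" 75)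
  assumes scaleC_add_right: "a *\<^sub>C (x + y) = a *\<^sub>C x + a *\<^sub>C y"
    and scaleC_add_left: "(a + b) *\<^sub>C x = a *\<^sub>C x + b *\<^sub>C x"
    and scaleC_scaleC: "a *\<^sub>C (b *\<^sub>C x) = (a * b) *\<^sub>C x"
    and scaleC_one: "1 *\<^sub>C x = x"
    and scaleR_scaleC: "scaleR r x = complex_of_real r *\<^sub>C x"

text \<open>Complex inner product spaces (inner product linear in the first argument),
  whose norm is the one induced by the inner product.  A complex Hilbert space is
  such a space that is additionally complete (class complete_space).\<close>
class cinner_space = cvec + real_normed_vector +
  fixes cinner :: "'a \<Rightarrow> 'a \<Rightarrow> complex"
  assumes cinner_conj: "cinner x y = cnj (cinner y x)"
    and cinner_add_left: "cinner (x + y) z = cinner x z + cinner y z"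
    and cinner_scaleC_left: "cinner (a *\<^sub>C x) y = a * cinner x y"
    and cinner_nonneg: "0 \<le> Re (cinner x x)"
    and cinner_eq_zero: "cinner x x = 0 \<longleftrightarrow> x = 0"
    and norm_cinner: "norm x = sqrt (Re (cinner x x))"

definition clinear_op :: "('a::cvec \<Rightarrow> 'a) \<Rightarrow> bool" where
  "clinear_op T \<longleftrightarrow> (\<forall>x y. T (x + y) = T x + T y) \<and> (\<forall>c x. T (c *\<^sub>C x) = c *\<^sub>C T x)"

definition bounded_op :: "('a::cinner_space \<Rightarrow> 'a) \<Rightarrow> bool" where
  "bounded_op T \<longleftrightarrow> clinear_op T \<and> (\<exists>K. \<forall>x. norm (T x) \<le> K * norm x)"

definition is_adjoint :: "('a::cinner_space \<Rightarrow> 'a) \<Rightarrow> ('a \<Rightarrow> 'a) \<Rightarrow> bool" where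
  "is_adjoint A B \<longleftrightarrow> (\<forall>x y. cinner (A x) y = cinner x (B y))"

definition unit_sphere :: "'a::cinner_space set" where
  "unit_sphere = {x. norm x = 1}"

definition num_radius :: "('a::cinner_space \<Rightarrow> 'a) \<Rightarrow> real" where
  "num_radius T = (SUP x\<in>unit_sphere. cmod (cinner (T x) x))"

definition op_norm :: "('a::cinner_space \<Rightarrow> 'a) \<Rightarrow> real" where
  "op_norm T = (SUP x\<in>unit_sphere. norm (T x))"

definition omega_t :: "(real \<Rightarrow> real) \<Rightarrow> (real \<Rightarrow> real) \<Rightarrow> ('a::cinner_space \<Rightarrow> 'a) \<Rightarrow> ('a \<Rightarrow> 'a) \<Rightarrow> real \<Rightarrow> real" where
  "omega_t \<phi> \<psi> A Astar t =
     (SUP x\<in>unit_sphere. cmod (cinner (complex_of_real (\<phi> t) *\<^sub>C A x + complex_of_real (\<psi> t) *\<^sub>C Astar x) x))"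

end

theory Submission
  imports Defs
begin

lemma ci_add_right: "cinner (x::'a::cinner_space) (y + z) = cinner x y + cinner x z"
  by (metis cinner_conj cinner_add_left complex_cnj_add)

lemma ci_scaleC_right: "cinner (x::'a::cinner_space) (a *\<^sub>C y) = cnj a * cinner x y"
  by (metis cinner_conj cinner_scaleC_left complex_cnj_mult complex_cnj_cnj)

lemma scaleC_zero: "(0::complex) *\<^sub>C (x::'a::cinner_space) = 0"
  by (metis scaleR_scaleC of_real_0 scaleR_zero_left)

lemma ci_zero_left: "cinner (0::'a::cinner_space) y = 0"
  by (metis cinner_scaleC_left scaleC_zero mult_zero_left)

lemma ci_zero_right: "cinner (y::'a::cinner_space) 0 = 0"
  by (metis cinner_conj ci_zero_left complex_cnj_zero)

lemma scaleC_minus: "- (c *\<^sub>C (y::'a::cinner_space)) = (-c) *\<^sub>C y"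
  by (metis scaleR_scaleC scaleR_minus1_left scaleC_scaleC of_real_1 of_real_minus mult_minus1)

lemma ci_minus_left: "cinner (- (x::'a::cinner_space)) y = - cinner x y"
  by (metis scaleC_minus scaleC_one cinner_scaleC_left mult_minus1)

lemma ci_diff_left: "cinner ((x::'a::cinner_space) - y) z = cinner x z - cinner y z"
  by (metis diff_conv_add_uminus ci_minus_left cinner_add_left)

lemma ci_minus_right: "cinner (x::'a::cinner_space) (- y) = - cinner x y"
  by (metis cinner_conj ci_minus_left complex_cnj_minus)

lemma ci_diff_right: "cinner (x::'a::cinner_space) (y - z) = cinner x y - cinner x z"
  by (metis diff_conv_add_uminus ci_minus_right ci_add_right)

lemma ci_self: "cinner (x::'a::cinner_space) x = complex_of_real ((norm x)^2)"
proof (rule complex_eqI)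
  show "Re (cinner x x) = Re (complex_of_real ((norm x)^2))"
    using norm_cinner[of x] cinner_nonneg[of x] by simp
  have "cinner x x = cnj (cinner x x)" by (rule cinner_conj)
  then have "Im (cinner x x) = - Im (cinner x x)" by (metis cnj.sel(2))
  then show "Im (cinner x x) = Im (complex_of_real ((norm x)^2))" by simp
qed

lemma ci_expand: "cinner ((x::'a::cinner_space) + d *\<^sub>C y) (x + d *\<^sub>C y)
   = cinner x x + cnj d * cinner x y + d * cnj (cinner x y) + d * cnj d * cinner y y"
  by (simp add: cinner_add_left ci_add_right cinner_scaleC_left ci_scaleC_right
      cinner_conj[of y x] algebra_simps)

lemma cauchy_schwarz: "cmod (cinner (x::'a::cinner_space) y) \<le> norm x * norm y"
proof (cases "y = 0")
  case True then show ?thesis by (simp add: ci_zero_right)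
next
  case False
  define n where "n = (norm y)^2"
  have n: "n > 0" using False by (simp add: n_def)
  define p where "p = cinner x y"
  define d where "d = - p / complex_of_real n"
  have "cinner (x + d *\<^sub>C y) (x + d *\<^sub>C y) = complex_of_real ((norm x)^2) - p * cnj p / complex_of_real n"
    using n unfolding ci_expand d_def ci_self[of y] ci_self[of x] n_def[symmetric] p_def[symmetric]
    by (simp add: field_simps power2_eq_square)
  moreover have "p * cnj p = complex_of_real ((cmod p)^2)"
    by (metis complex_norm_square)
  ultimately have "cinner (x + d *\<^sub>C y) (x + d *\<^sub>C y) = complex_of_real ((norm x)^2 - (cmod p)^2 / n)"
    by simp
  then have "0 \<le> (norm x)^2 - (cmod p)^2 / n"
    by (metis ci_self of_real_eq_iff zero_le_power2)
  then have "(cmod p)^2 \<le> (norm x)^2 * n" using n by (simp add: field_simps)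
  then have "(cmod p)^2 \<le> (norm x * norm y)^2" by (simp add: n_def power_mult_distrib)
  then show ?thesis unfolding p_def
    by (meson norm_ge_zero mult_nonneg_nonneg power2_le_imp_le)
qed


lemma final_arith:
  fixes a b be ga Om N R P W :: real
  assumes h1: "be^2 + ga^2 \<le> Om^2" and h2: "4*be^2 \<le> N + 2*R" and h3: "4*ga^2 \<le> N - 2*R"
    and h4: "N \<le> P" and h5: "\<bar>R\<bar> \<le> W"
  shows "(a+b)^2*be^2 + (a-b)^2*ga^2 \<le> \<bar>a\<bar>^2 * Om^2 + \<bar>a*b\<bar>*W + (\<bar>a\<bar>+\<bar>b\<bar>)/2*\<bar>b\<bar>*P"
proof -
  have e: "(a+b)^2*be^2 + (a-b)^2*ga^2 = a^2*(be^2+ga^2) + b^2*(be^2+ga^2) + 2*(a*b)*(be^2-ga^2)"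
    by (simp add: power2_eq_square algebra_simps)
  have t1: "a^2*(be^2+ga^2) \<le> \<bar>a\<bar>^2 * Om^2" using h1 by (simp add: mult_left_mono)
  have "be^2+ga^2 \<le> P/2" using h2 h3 h4 by linarith
  then have t2: "b^2*(be^2+ga^2) \<le> b^2 * (P/2)" by (rule mult_left_mono) simp
  have t3: "2*(a*b)*(be^2-ga^2) \<le> \<bar>a*b\<bar> * (P/2 + W)"
  proof (cases "a*b \<ge> 0")
    case True
    have "4*be^2 \<le> P + 2*W" using h2 h4 h5 abs_ge_self[of R] by linarith
    then have "be^2 \<le> (P/2 + W)/2" by (simp add: field_simps)
    then have "be^2 - ga^2 \<le> (P/2 + W)/2" using zero_le_power2[of ga] by linarith
    then have "(a*b)*(be^2-ga^2) \<le> (a*b)*((P/2 + W)/2)" using True by (intro mult_left_mono) auto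
    then show ?thesis using True by simp
  next
    case False
    have "4*ga^2 \<le> P + 2*W" using h3 h4 h5 abs_ge_minus_self[of R] by linarith
    then have "ga^2 \<le> (P/2 + W)/2" by (simp add: field_simps)
    then have "ga^2 - be^2 \<le> (P/2 + W)/2" using zero_le_power2[of be] by linarith
    then have "(-(a*b))*(ga^2-be^2) \<le> (-(a*b))*((P/2 + W)/2)" using False by (intro mult_left_mono) auto
    then show ?thesis using False by (simp add: algebra_simps)
  qed
  have "\<bar>a*b\<bar> * (P/2 + W) + b^2 * (P/2) = \<bar>a*b\<bar>*W + (\<bar>a\<bar>+\<bar>b\<bar>)/2*\<bar>b\<bar>*P"
    by (simp add: abs_mult algebra_simps power2_eq_square)
  then show ?thesis using e t1 t2 t3 by linarith
qed


lemma adj_swap: "is_adjoint A B \<Longrightarrow> cinner (A u) v = cinner u (B v)"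
  unfolding is_adjoint_def by blast

lemma ci_plus_self: "cinner ((u::'a::cinner_space) + v) (u + v)
   = cinner u u + cinner v v + complex_of_real (2 * Re (cinner u v))"
proof -
  have "cinner (u + v) (u + v) = cinner u u + cinner v v + (cinner u v + cnj (cinner u v))"
    by (simp add: cinner_add_left ci_add_right cinner_conj[of v u])
  also have "cinner u v + cnj (cinner u v) = complex_of_real (2 * Re (cinner u v))"
    by (simp add: complex_add_cnj)
  finally show ?thesis .
qed

lemma ci_minus_self: "cinner ((u::'a::cinner_space) - v) (u - v)
   = cinner u u + cinner v v - complex_of_real (2 * Re (cinner u v))"
proof -
  have "cinner (u - v) (u - v) = cinner u u + cinner v v - (cinner u v + cnj (cinner u v))"
    by (simp add: ci_diff_left ci_diff_right cinner_conj[of v u])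
  also have "cinner u v + cnj (cinner u v) = complex_of_real (2 * Re (cinner u v))"
    by (simp add: complex_add_cnj)
  finally show ?thesis .
qed

lemma pointwise:
  fixes A As :: "'a::cinner_space \<Rightarrow> 'a" and a b Om W P :: real
  assumes adj: "is_adjoint A As" and nx: "norm x = 1"
    and hz: "cmod (cinner (A x) x) \<le> Om"
    and hW: "cmod (cinner (A (A x)) x) \<le> W"
    and hP: "norm (As (A x) + A (As x)) \<le> P"
  shows "(cmod (cinner (complex_of_real a *\<^sub>C A x + complex_of_real b *\<^sub>C As x) x))^2
     \<le> \<bar>a\<bar>^2 * Om^2 + \<bar>a*b\<bar>*W + (\<bar>a\<bar>+\<bar>b\<bar>)/2*\<bar>b\<bar>*P"
proof -
  define z where "z = cinner (A x) x"
  have f1: "cinner (As x) x = cnj z"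
    unfolding z_def by (metis cinner_conj adj_swap[OF adj])
  have w: "cinner (complex_of_real a *\<^sub>C A x + complex_of_real b *\<^sub>C As x) x
      = complex_of_real a * z + complex_of_real b * cnj z"
    by (simp add: cinner_add_left cinner_scaleC_left f1 z_def)
  have wsq: "(cmod (complex_of_real a * z + complex_of_real b * cnj z))^2
      = (a+b)^2 * (Re z)^2 + (a-b)^2 * (Im z)^2"
  proof -
    have r: "Re (complex_of_real a * z + complex_of_real b * cnj z) = (a+b) * Re z"
      by (simp add: algebra_simps)
    have i: "Im (complex_of_real a * z + complex_of_real b * cnj z) = (a-b) * Im z"
      by (simp add: algebra_simps)
    show ?thesis by (simp only: cmod_power2 r i power_mult_distrib)
  qed
  define N where "N = (norm (A x))^2 + (norm (As x))^2"
  have f2: "cinner (As (A x)) x = complex_of_real ((norm (A x))^2)"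
    by (metis cinner_conj adj_swap[OF adj] ci_self complex_cnj_complex_of_real)
  have f3: "cinner (A (As x)) x = complex_of_real ((norm (As x))^2)"
    by (metis adj_swap[OF adj] ci_self)
  have "cinner (As (A x) + A (As x)) x = complex_of_real N"
    by (simp add: cinner_add_left f2 f3 N_def)
  then have "N \<le> cmod (cinner (As (A x) + A (As x)) x)" by simp
  also have "\<dots> \<le> norm (As (A x) + A (As x))" using cauchy_schwarz[of "As (A x) + A (As x)" x] nx by simp
  finally have hN: "N \<le> P" using hP by linarith
  define R where "R = Re (cinner (A x) (As x))"
  have "cinner (A x) (As x) = cinner (A (A x)) x" by (metis adj_swap[OF adj])
  then have hR: "\<bar>R\<bar> \<le> W" unfolding R_def using hW abs_Re_le_cmod[of "cinner (A (A x)) x"] by simp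
  have np: "(norm (A x + As x))^2 = N + 2*R"
  proof -
    have "complex_of_real ((norm (A x + As x))^2) = cinner (A x + As x) (A x + As x)"
      by (rule ci_self[symmetric])
    also have "\<dots> = complex_of_real (N + 2*R)" unfolding ci_plus_self by (simp add: ci_self N_def R_def)
    finally show ?thesis by (metis of_real_eq_iff)
  qed
  have nm: "(norm (A x - As x))^2 = N - 2*R"
  proof -
    have "complex_of_real ((norm (A x - As x))^2) = cinner (A x - As x) (A x - As x)"
      by (rule ci_self[symmetric])
    also have "\<dots> = complex_of_real (N - 2*R)" unfolding ci_minus_self by (simp add: ci_self N_def R_def)
    finally show ?thesis by (metis of_real_eq_iff)
  qed
  have "cinner (A x + As x) x = z + cnj z" by (simp add: cinner_add_left f1 z_def)
  also have "\<dots> = complex_of_real (2 * Re z)" by (simp add: complex_add_cnj)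
  finally have "cmod (complex_of_real (2 * Re z)) \<le> norm (A x + As x)"
    using cauchy_schwarz[of "A x + As x" x] nx by simp
  then have "\<bar>2 * Re z\<bar> \<le> norm (A x + As x)" by simp
  then have "(2 * Re z)^2 \<le> (norm (A x + As x))^2"
    by (metis abs_ge_zero power2_abs power_mono)
  then have h2: "4 * (Re z)^2 \<le> N + 2*R" using np by (simp add: power_mult_distrib)
  have "cinner (A x - As x) x = z - cnj z" by (simp add: ci_diff_left f1 z_def)
  also have "\<dots> = complex_of_real (2 * Im z) * \<i>" by (simp add: complex_diff_cnj)
  finally have "cmod (complex_of_real (2 * Im z) * \<i>) \<le> norm (A x - As x)"
    using cauchy_schwarz[of "A x - As x" x] nx by simp
  then have "\<bar>2 * Im z\<bar> \<le> norm (A x - As x)" by (simp add: norm_mult)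
  then have "(2 * Im z)^2 \<le> (norm (A x - As x))^2"
    by (metis abs_ge_zero power2_abs power_mono)
  then have h3: "4 * (Im z)^2 \<le> N - 2*R" using nm by (simp add: power_mult_distrib)
  have "(cmod z)^2 \<le> Om^2" using hz unfolding z_def[symmetric]
    by (metis norm_ge_zero power_mono)
  then have h1: "(Re z)^2 + (Im z)^2 \<le> Om^2" by (simp add: cmod_power2)
  show ?thesis unfolding w wsq using final_arith[OF h1 h2 h3 hN hR] by simp
qed


lemma adj_bound:
  fixes A As :: "'a::cinner_space \<Rightarrow> 'a"
  assumes adj: "is_adjoint A As" and K: "\<And>x. norm (A x) \<le> K * norm x" and K0: "0 \<le> K"
  shows "norm (As y) \<le> K * norm y"
proof (cases "norm (As y) = 0")
  case True
  have "0 \<le> K * norm y" using K0 by simp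
  then show ?thesis using True by simp
next
  case False
  have "complex_of_real ((norm (As y))^2) = cinner (As y) (As y)" by (rule ci_self[symmetric])
  also have "\<dots> = cinner (A (As y)) y" by (metis adj_swap[OF adj])
  finally have "(norm (As y))^2 = Re (cinner (A (As y)) y)" by (metis Re_complex_of_real)
  also have "\<dots> \<le> cmod (cinner (A (As y)) y)" by (rule complex_Re_le_cmod)
  also have "\<dots> \<le> norm (A (As y)) * norm y" by (rule cauchy_schwarz)
  also have "\<dots> \<le> K * norm (As y) * norm y" using K[of "As y"] by (simp add: mult_right_mono)
  finally have "norm (As y) * norm (As y) \<le> (K * norm y) * norm (As y)"
    by (simp add: power2_eq_square algebra_simps)
  then show ?thesis using False by (simp add: mult_le_cancel_right)
qed

theorem theorem3p7:
  fixes A Astar :: "'a::{cinner_space, complete_space} \<Rightarrow> 'a"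
    and \<phi> \<psi> :: "real \<Rightarrow> real" and t :: real
  assumes "\<exists>x::'a. x \<noteq> 0"
    and "bounded_op A"
    and "is_adjoint A Astar"
    and "continuous_on {0..1} \<phi>" and "continuous_on {0..1} \<psi>"
    and "t \<in> {0..1}"
  shows "(omega_t \<phi> \<psi> A Astar t)\<^sup>2
     \<le> \<bar>\<phi> t\<bar>\<^sup>2 * (num_radius A)\<^sup>2 + \<bar>\<phi> t * \<psi> t\<bar> * num_radius (A \<circ> A)
       + (\<bar>\<phi> t\<bar> + \<bar>\<psi> t\<bar>) / 2 * \<bar>\<psi> t\<bar> * op_norm (\<lambda>x. Astar (A x) + A (Astar x))"
proof -
  note adj = assms(3)
  obtain K0 where K0: "\<And>x. norm (A x) \<le> K0 * norm x"
    using assms(2) unfolding bounded_op_def by blast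
  define K where "K = \<bar>K0\<bar>"
  have K: "norm (A x) \<le> K * norm x" for x
    using K0[of x] unfolding K_def by (meson abs_ge_self mult_right_mono norm_ge_zero order_trans)
  have K0le: "0 \<le> K" unfolding K_def by simp
  have KS: "norm (Astar x) \<le> K * norm x" for x by (rule adj_bound[OF adj K K0le])
  obtain x0 :: 'a where "x0 \<noteq> 0" using assms(1) by blast
  define u0 where "u0 = scaleR (1 / norm x0) x0"
  have u0: "u0 \<in> unit_sphere" unfolding unit_sphere_def u0_def using \<open>x0 \<noteq> 0\<close> by simp
  have S1: "x \<in> unit_sphere \<Longrightarrow> norm x = 1" for x :: 'a unfolding unit_sphere_def by simp
  have bd1: "bdd_above ((\<lambda>x. cmod (cinner (A x) x)) ` unit_sphere)"
  proof (rule bdd_aboveI2)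
    fix x :: 'a assume "x \<in> unit_sphere"
    then have "norm x = 1" by (rule S1)
    have "cmod (cinner (A x) x) \<le> norm (A x) * norm x" by (rule cauchy_schwarz)
    also have "\<dots> \<le> K" using K[of x] \<open>norm x = 1\<close> by simp
    finally show "cmod (cinner (A x) x) \<le> K" .
  qed
  have bd2: "bdd_above ((\<lambda>x. cmod (cinner ((A \<circ> A) x) x)) ` unit_sphere)"
  proof (rule bdd_aboveI2)
    fix x :: 'a assume "x \<in> unit_sphere"
    then have "norm x = 1" by (rule S1)
    have "cmod (cinner ((A \<circ> A) x) x) \<le> norm (A (A x)) * norm x" using cauchy_schwarz by simp
    also have "\<dots> \<le> K * norm (A x)" using K[of "A x"] \<open>norm x = 1\<close> by simp
    also have "\<dots> \<le> K * K" using K[of x] \<open>norm x = 1\<close> K0le by (simp add: mult_left_mono)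
    finally show "cmod (cinner ((A \<circ> A) x) x) \<le> K * K" .
  qed
  have bd3: "bdd_above ((\<lambda>x. norm (Astar (A x) + A (Astar x))) ` unit_sphere)"
  proof (rule bdd_aboveI2)
    fix x :: 'a assume "x \<in> unit_sphere"
    then have "norm x = 1" by (rule S1)
    have "norm (Astar (A x) + A (Astar x)) \<le> norm (Astar (A x)) + norm (A (Astar x))"
      by (rule norm_triangle_ineq)
    also have "\<dots> \<le> K * norm (A x) + K * norm (Astar x)" using K KS by (meson add_mono)
    also have "\<dots> \<le> K * K + K * K" using K[of x] KS[of x] \<open>norm x = 1\<close> K0le
      by (intro add_mono mult_left_mono) auto
    finally show "norm (Astar (A x) + A (Astar x)) \<le> K * K + K * K" .
  qed
  define RHS where "RHS = \<bar>\<phi> t\<bar>\<^sup>2 * (num_radius A)\<^sup>2 + \<bar>\<phi> t * \<psi> t\<bar> * num_radius (A \<circ> A)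
       + (\<bar>\<phi> t\<bar> + \<bar>\<psi> t\<bar>) / 2 * \<bar>\<psi> t\<bar> * op_norm (\<lambda>x. Astar (A x) + A (Astar x))"
  define g where "g x = cmod (cinner (complex_of_real (\<phi> t) *\<^sub>C A x + complex_of_real (\<psi> t) *\<^sub>C Astar x) x)" for x
  have pw: "(g x)^2 \<le> RHS" if x: "x \<in> unit_sphere" for x
  proof -
    have hz: "cmod (cinner (A x) x) \<le> num_radius A"
      unfolding num_radius_def using cSUP_upper[OF x bd1] .
    have hW: "cmod (cinner (A (A x)) x) \<le> num_radius (A \<circ> A)"
      unfolding num_radius_def using cSUP_upper[OF x bd2] by simp
    have hP: "norm (Astar (A x) + A (Astar x)) \<le> op_norm (\<lambda>x. Astar (A x) + A (Astar x))"
      unfolding op_norm_def using cSUP_upper[OF x bd3] .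
    show ?thesis unfolding g_def RHS_def by (rule pointwise[OF adj S1[OF x] hz hW hP])
  qed
  have gle: "g x \<le> sqrt RHS" if "x \<in> unit_sphere" for x
    using pw[OF that] by (simp add: real_le_rsqrt)
  have om: "omega_t \<phi> \<psi> A Astar t = (SUP x\<in>unit_sphere. g x)"
    unfolding omega_t_def g_def by simp
  have ne: "unit_sphere \<noteq> ({} :: 'a set)" using u0 by blast
  have up: "omega_t \<phi> \<psi> A Astar t \<le> sqrt RHS"
    unfolding om by (rule cSUP_least[OF ne gle])
  have bdg: "bdd_above (g ` unit_sphere)" using gle by (rule bdd_aboveI2)
  have "g u0 \<le> omega_t \<phi> \<psi> A Astar t" unfolding om by (rule cSUP_upper[OF u0 bdg])
  moreover have "0 \<le> g u0" unfolding g_def by simp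
  ultimately have lo: "0 \<le> omega_t \<phi> \<psi> A Astar t" by linarith
  have "0 \<le> RHS" using pw[OF u0] by (meson order_trans zero_le_power2)
  have "(omega_t \<phi> \<psi> A Astar t)\<^sup>2 \<le> (sqrt RHS)\<^sup>2" using lo up by (simp add: power_mono)
  also have "\<dots> = RHS" using \<open>0 \<le> RHS\<close> by simp
  finally show ?thesis unfolding RHS_def .
qed

end
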